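(* Let $\mathcal I,\mathcal O\subset\{1,\dots,K\}$ be disjoint sets of local populations, and let $T>0$ and a partition function $\Theta$ be fixed. Then the degeneracy and complexity satisfy $$\mathcal D_{T,\zeta}(\mathcal I:\mathcal O)\le\mathcal C_{T,\zeta}(\mathcal I:\mathcal O).$$
   Context: Setting: a spiking neuronal network with $K$ local populations whose state evolves as a continuous-time Markov process $X_t$ with unique invariant probability distribution $\pi$; $S_{[0,T)}$ is the random spike train of the network on $[0,T)$ (the finite list of spikes $(t_l,\xi_l)$, $l=1,\dots,Z$, with spike time $t_l$ and spiking neuron $\xi_l$) when $X_0\sim\pi$, and each neuron $\xi$ belongs to a local population $k(\xi)\in\{1,\dots,K\}$. Fix a partition function $\Theta:\mathbb{Z}_{\ge0}\to\{1,\dots,d\}$. For a set $C=\{C_1,\dots,C_{|C|}\}\subset\{1,\dots,K\}$ (with a fixed ordering), define $$\zeta_C(S_{[0,T)})=\sum_{n=1}^{|C|}d^{\,n-1}\,\Theta\Big(\sum_{l=1}^Z\mathbf{1}_{\{k(\xi_l)=C_n\}}\Big),$$ an injective encoding of the vector of coarse-grained spike counts of the populations in $C$; for $C=\emptyset$, $\zeta_\emptyset$ is constant. The coarse-grained entropy is $H_{T,\zeta_C}=-\sum_i p_i\log p_i$ with $p_i=\mathbb{P}_\pi[\zeta_C(S_{[0,T)})=i]$. For disjoint $A,B$, $MI_{T,\zeta}(A:B)=H_{T,\zeta_A}+H_{T,\zeta_B}-H_{T,\zeta_{A\cup B}}$, and for pairwise disjoint $A,B,C$, $$MI_{T,\zeta}(A:B:C)=H_{T,\zeta_A}+H_{T,\zeta_B}+H_{T,\zeta_C}-H_{T,\zeta_{A\cup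 B}}-H_{T,\zeta_{B\cup C}}-H_{T,\zeta_{A\cup C}}+H_{T,\zeta_{A\cup B\cup C}}.$$ Degeneracy and complexity: with the sum over $k=0,\dots,|\mathcal I|$ and over all subsets $\mathcal I_k\subseteq\mathcal I$ of cardinality $k$, and $\mathcal I_k^c=\mathcal I\setminus\mathcal I_k$, $$\mathcal D_{T,\zeta}(\mathcal I:\mathcal O)=\sum_{k=0}^{|\mathcal I|}\frac{1}{2\binom{|\mathcal I|}{k}}\sum_{\mathcal I_k}MI_{T,\zeta}(\mathcal I_k:\mathcal I_k^c:\mathcal O),\qquad \mathcal C_{T,\zeta}(\mathcal I:\mathcal O)=\sum_{k=0}^{|\mathcal I|}\frac{1}{2\binom{|\mathcal I|}{k}}\sum_{\mathcal I_k}MI_{T,\zeta}(\mathcal I_k:\mathcal I_k^c).$$ *)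

theory Defs
  imports "HOL-Probability.Probability"
begin

text \<open>A spike train on [0,T) is a finite list of spikes (t_l, xi_l).
  kpop assigns to each neuron its local population.\<close>

type_synonym 'n spike_train = "(real \<times> 'n) list"

definition pop_count :: "('n \<Rightarrow> nat) \<Rightarrow> nat \<Rightarrow> 'n spike_train \<Rightarrow> nat" where
  "pop_count kpop c s = length (filter (\<lambda>(t, \<xi>). kpop \<xi> = c) s)"

text \<open>zeta_C with the fixed ordering of C given by sorted_list_of_set;
  index n here runs over 0..|C|-1 (paper: n = 1..|C| with d^(n-1)).\<close>
definition zeta :: "nat \<Rightarrow> (nat \<Rightarrow> nat) \<Rightarrow> ('n \<Rightarrow> nat) \<Rightarrow> nat set \<Rightarrow> 'n spike_train \<Rightarrow> nat" where
  "zeta d \<Theta> kpop C s =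
     (\<Sum>n<card C. d ^ n * \<Theta> (pop_count kpop (sorted_list_of_set C ! n) s))"

definition cg_entropy ::
  "'a measure \<Rightarrow> ('a \<Rightarrow> 'n spike_train) \<Rightarrow> nat \<Rightarrow> (nat \<Rightarrow> nat) \<Rightarrow> ('n \<Rightarrow> nat) \<Rightarrow> nat set \<Rightarrow> real" where
  "cg_entropy M S d \<Theta> kpop C =
     - (\<Sum>i \<in> (\<lambda>\<omega>. zeta d \<Theta> kpop C (S \<omega>)) ` space M.
          measure M {\<omega> \<in> space M. zeta d \<Theta> kpop C (S \<omega>) = i}
          * ln (measure M {\<omega> \<in> space M. zeta d \<Theta> kpop C (S \<omega>) = i}))"

definition MI2 :: "(nat set \<Rightarrow> real) \<Rightarrow> nat set \<Rightarrow> nat set \<Rightarrow> real" where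
  "MI2 H A B = H A + H B - H (A \<union> B)"

definition MI3 :: "(nat set \<Rightarrow> real) \<Rightarrow> nat set \<Rightarrow> nat set \<Rightarrow> nat set \<Rightarrow> real" where
  "MI3 H A B C = H A + H B + H C - H (A \<union> B) - H (B \<union> C) - H (A \<union> C) + H (A \<union> B \<union> C)"

definition degeneracy :: "(nat set \<Rightarrow> real) \<Rightarrow> nat set \<Rightarrow> nat set \<Rightarrow> real" where
  "degeneracy H I Out =
     (\<Sum>k = 0..card I. 1 / (2 * real (card I choose k)) *
        (\<Sum>Ik \<in> {J. J \<subseteq> I \<and> card J = k}. MI3 H Ik (I - Ik) Out))"

definition complexity :: "(nat set \<Rightarrow> real) \<Rightarrow> nat set \<Rightarrow> nat set \<Rightarrow> real" where
  "complexity H I Out =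
     (\<Sum>k = 0..card I. 1 / (2 * real (card I choose k)) *
        (\<Sum>Ik \<in> {J. J \<subseteq> I \<and> card J = k}. MI2 H Ik (I - Ik)))"

end

theory Submission imports Defs begin

definition Hent :: "'a measure \<Rightarrow> ('a \<Rightarrow> 'b) \<Rightarrow> real" where
  "Hent M g = - (\<Sum>v\<in>g ` space M. measure M {\<omega>\<in>space M. g \<omega> = v} * ln (measure M {\<omega>\<in>space M. g \<omega> = v}))"

lemma marg:
  assumes "prob_space M" and sf: "simple_function M g"
  shows "(\<Sum>v\<in>g ` space M. measure M {\<omega>\<in>space M. g \<omega> = v} * h (\<phi> v)) =
         (\<Sum>w\<in>(\<lambda>\<omega>. \<phi> (g \<omega>)) ` space M. measure M {\<omega>\<in>space M. \<phi> (g \<omega>) = w} * h w)"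
proof -
  interpret prob_space M by fact
  have fin: "finite (g ` space M)" using sf by (simp add: simple_functionD)
  have ev: "\<And>v. v \<in> g ` space M \<Longrightarrow> {\<omega>\<in>space M. g \<omega> = v} \<in> sets M"
  proof -
    fix v assume "v \<in> g ` space M"
    then have "g -` {v} \<inter> space M \<in> sets M" using sf by (simp add: simple_functionD)
    moreover have "g -` {v} \<inter> space M = {\<omega>\<in>space M. g \<omega> = v}" by blast
    ultimately show "{\<omega>\<in>space M. g \<omega> = v} \<in> sets M" by simp
  qed
  have P: "measure M {\<omega>\<in>space M. \<phi> (g \<omega>) = w} = (\<Sum>v\<in>{v\<in>g ` space M. \<phi> v = w}. measure M {\<omega>\<in>space M. g \<omega> = v})" for w
  proof -
    have "{\<omega>\<in>space M. \<phi> (g \<omega>) = w} = (\<Union>v\<in>{v\<in>g ` space M. \<phi> v = w}. {\<omega>\<in>space M. g \<omega> = v})" by auto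
    moreover have "measure M (\<Union>v\<in>{v\<in>g ` space M. \<phi> v = w}. {\<omega>\<in>space M. g \<omega> = v}) = (\<Sum>v\<in>{v\<in>g ` space M. \<phi> v = w}. measure M {\<omega>\<in>space M. g \<omega> = v})"
      by (rule finite_measure_finite_Union) (use fin ev in \<open>auto simp: disjoint_family_on_def\<close>)
    ultimately show ?thesis by simp
  qed
  have img: "(\<lambda>\<omega>. \<phi> (g \<omega>)) ` space M = \<phi> ` (g ` space M)" by auto
  show ?thesis
    unfolding img P sum_distrib_right
    by (subst sum.image_gen[OF fin, of _ \<phi>]) (auto intro!: sum.cong)
qed

lemma Hent_inj:
  assumes "prob_space M" and sf: "simple_function M g" and inj: "inj_on \<phi> (g ` space M)"
  shows "Hent M (\<lambda>\<omega>. \<phi> (g \<omega>)) = Hent M g"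
proof -
  have eq: "{\<omega>\<in>space M. \<phi> (g \<omega>) = \<phi> v} = {\<omega>\<in>space M. g \<omega> = v}" if "v \<in> g ` space M" for v
    using inj that by (auto simp: inj_on_def)
  have "Hent M (\<lambda>\<omega>. \<phi> (g \<omega>)) = - (\<Sum>v\<in>g ` space M. measure M {\<omega>\<in>space M. g \<omega> = v} *
      ln (measure M {\<omega>\<in>space M. \<phi> (g \<omega>) = \<phi> v}))"
    unfolding Hent_def using marg[OF assms(1,2), of "\<lambda>w. ln (measure M {\<omega>\<in>space M. \<phi> (g \<omega>) = w})" \<phi>]
    by simp
  also have "\<dots> = Hent M g" unfolding Hent_def
    by (simp add: eq cong: sum.cong)
  finally show ?thesis .
qed


lemma preim_eq: "f -` {x} \<inter> space M = {\<omega>\<in>space M. f \<omega> = x}" by blast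

lemma submod:
  assumes "prob_space M" and X: "simple_function M X" and Y: "simple_function M Y" and Z: "simple_function M Z"
  shows "Hent M Z + Hent M (\<lambda>\<omega>. (X \<omega>, Y \<omega>, Z \<omega>)) \<le> Hent M (\<lambda>\<omega>. (X \<omega>, Z \<omega>)) + Hent M (\<lambda>\<omega>. (Y \<omega>, Z \<omega>))"
proof -
  interpret prob_space M by fact
  interpret information_space M "exp 1" by standard simp
  have XZ: "simple_function M (\<lambda>\<omega>. (X \<omega>, Z \<omega>))" using X Z by (rule simple_function_Pair)
  have YZ: "simple_function M (\<lambda>\<omega>. (Y \<omega>, Z \<omega>))" using Y Z by (rule simple_function_Pair)
  have XYZ: "simple_function M (\<lambda>\<omega>. (X \<omega>, Y \<omega>, Z \<omega>))" using X YZ by (rule simple_function_Pair)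
  define pz where "pz z = measure M {\<omega>\<in>space M. Z \<omega> = z}" for z
  define pxz where "pxz w = measure M {\<omega>\<in>space M. (X \<omega>, Z \<omega>) = w}" for w
  define pyz where "pyz w = measure M {\<omega>\<in>space M. (Y \<omega>, Z \<omega>) = w}" for w
  define p where "p w = measure M {\<omega>\<in>space M. (X \<omega>, Y \<omega>, Z \<omega>) = w}" for w
  note sd = simple_distributedI[OF _ measure_nonneg refl]
  have "0 \<le> (\<Sum>(x, y, z)\<in>(\<lambda>x. (X x, Y x, Z x))`space M. p (x, y, z) * log (exp 1) (p (x, y, z) / (pxz (x, z) * (pyz (y,z) / pz z))))"
    using conditional_mutual_information_nonneg[OF X Y Z]
    unfolding conditional_mutual_information_eq[OF sd[OF Z] sd[OF YZ] sd[OF XZ] sd[OF XYZ]]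
    unfolding preim_eq p_def pxz_def pyz_def pz_def .
  also have "\<dots> = (\<Sum>v\<in>(\<lambda>x. (X x, Y x, Z x))`space M. p v * ln (p v) - p v * ln (pxz (fst v, snd (snd v)))
      - p v * ln (pyz (snd v)) + p v * ln (pz (snd (snd v))))"
  proof (rule sum.cong[OF refl], clarify)
    fix \<omega> assume "\<omega> \<in> space M"
    show "p (X \<omega>, Y \<omega>, Z \<omega>) * log (exp 1) (p (X \<omega>, Y \<omega>, Z \<omega>) / (pxz (X \<omega>, Z \<omega>) * (pyz (Y \<omega>, Z \<omega>) / pz (Z \<omega>)))) = 
      p (X \<omega>, Y \<omega>, Z \<omega>) * ln (p (X \<omega>, Y \<omega>, Z \<omega>)) - p (X \<omega>, Y \<omega>, Z \<omega>) * ln (pxz (fst (X \<omega>, Y \<omega>, Z \<omega>), snd (snd (X \<omega>, Y \<omega>, Z \<omega>)))) -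
         p (X \<omega>, Y \<omega>, Z \<omega>) * ln (pyz (snd (X \<omega>, Y \<omega>, Z \<omega>))) + p (X \<omega>, Y \<omega>, Z \<omega>) * ln (pz (snd (snd (X \<omega>, Y \<omega>, Z \<omega>))))"
    proof (cases "p (X \<omega>, Y \<omega>, Z \<omega>) = 0")
      case True then show ?thesis by simp
    next
      case False
      have ev: "{\<omega>'\<in>space M. (X \<omega>', Y \<omega>', Z \<omega>') = (X \<omega>, Y \<omega>, Z \<omega>)} \<in> sets M"
        using XYZ \<open>\<omega> \<in> space M\<close> by (auto simp: simple_function_def preim_eq)
      have "0 \<le> p (X \<omega>, Y \<omega>, Z \<omega>)" unfolding p_def by (rule measure_nonneg)
      then have pp: "0 < p (X \<omega>, Y \<omega>, Z \<omega>)" using False by linarith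
      have "p (X \<omega>, Y \<omega>, Z \<omega>) \<le> pxz (X \<omega>, Z \<omega>)"
        unfolding p_def pxz_def
        by (rule finite_measure_mono) (use XZ \<open>\<omega> \<in> space M\<close> in \<open>auto simp: simple_function_def preim_eq\<close>)
      then have a: "0 < pxz (X \<omega>, Z \<omega>)" using pp by simp
      have "p (X \<omega>, Y \<omega>, Z \<omega>) \<le> pyz (Y \<omega>, Z \<omega>)"
        unfolding p_def pyz_def
        by (rule finite_measure_mono) (use YZ \<open>\<omega> \<in> space M\<close> in \<open>auto simp: simple_function_def preim_eq\<close>)
      then have b: "0 < pyz (Y \<omega>, Z \<omega>)" using pp by simp
      have "p (X \<omega>, Y \<omega>, Z \<omega>) \<le> pz (Z \<omega>)"
        unfolding p_def pz_def
        by (rule finite_measure_mono) (use Z \<open>\<omega> \<in> space M\<close> in \<open>auto simp: simple_function_def preim_eq\<close>)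
      then have c: "0 < pz (Z \<omega>)" using pp by simp
      have "ln (p (X \<omega>, Y \<omega>, Z \<omega>) / (pxz (X \<omega>, Z \<omega>) * (pyz (Y \<omega>, Z \<omega>) / pz (Z \<omega>))))
         = ln (p (X \<omega>, Y \<omega>, Z \<omega>)) - ln (pxz (X \<omega>, Z \<omega>)) - ln (pyz (Y \<omega>, Z \<omega>)) + ln (pz (Z \<omega>))"
        using pp a b c by (simp add: ln_div ln_mult)
      moreover have "log (exp 1) t = ln t" for t by (simp add: log_def)
      ultimately show ?thesis by (simp add: right_diff_distrib distrib_left)
    qed
  qed
  also have "\<dots> = - Hent M (\<lambda>\<omega>. (X \<omega>, Y \<omega>, Z \<omega>)) + Hent M (\<lambda>\<omega>. (X \<omega>, Z \<omega>)) + Hent M (\<lambda>\<omega>. (Y \<omega>, Z \<omega>)) - Hent M Z"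
  proof -
    have m1: "(\<Sum>v\<in>(\<lambda>x. (X x, Y x, Z x))`space M. p v * ln (p v)) = - Hent M (\<lambda>\<omega>. (X \<omega>, Y \<omega>, Z \<omega>))"
      unfolding Hent_def p_def by simp
    have m2: "(\<Sum>v\<in>(\<lambda>x. (X x, Y x, Z x))`space M. p v * ln (pxz (fst v, snd (snd v)))) = - Hent M (\<lambda>\<omega>. (X \<omega>, Z \<omega>))"
      unfolding Hent_def p_def pxz_def
      using marg[OF assms(1) XYZ, of "\<lambda>w. ln (measure M {\<omega>\<in>space M. (X \<omega>, Z \<omega>) = w})" "\<lambda>v. (fst v, snd (snd v))"]
      by simp
    have m3: "(\<Sum>v\<in>(\<lambda>x. (X x, Y x, Z x))`space M. p v * ln (pyz (snd v))) = - Hent M (\<lambda>\<omega>. (Y \<omega>, Z \<omega>))"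
      unfolding Hent_def p_def pyz_def
      using marg[OF assms(1) XYZ, of "\<lambda>w. ln (measure M {\<omega>\<in>space M. (Y \<omega>, Z \<omega>) = w})" "\<lambda>v. snd v"]
      by simp
    have m4: "(\<Sum>v\<in>(\<lambda>x. (X x, Y x, Z x))`space M. p v * ln (pz (snd (snd v)))) = - Hent M Z"
      unfolding Hent_def p_def pz_def
      using marg[OF assms(1) XYZ, of "\<lambda>w. ln (measure M {\<omega>\<in>space M. Z \<omega> = w})" "\<lambda>v. snd (snd v)"]
      by simp
    show ?thesis
      by (simp add: sum.distrib sum_subtractf m1 m2 m3 m4)
  qed
  finally show ?thesis by simp
qed


lemma digits_lt: "(\<forall>n<m. a n < (d::nat)) \<Longrightarrow> (\<Sum>n<m. d^n * a n) < d^m"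
proof (induction m)
  case 0 then show ?case by simp
next
  case (Suc m)
  then have s: "(\<Sum>n<m. d^n * a n) < d^m" and am: "Suc (a m) \<le> d" by auto
  have "d^m * Suc (a m) \<le> d^m * d" using am by (rule mult_le_mono2)
  then have "d^m + d^m * a m \<le> d ^ Suc m" by (simp add: mult.commute)
  moreover have "(\<Sum>n<Suc m. d^n * a n) = (\<Sum>n<m. d^n * a n) + d^m * a m" by simp
  ultimately show ?case using s by linarith
qed

lemma digits_step: "x < (y::nat) \<Longrightarrow> s < D \<Longrightarrow> s + D * x \<noteq> t + D * y"
proof -
  assume "x < y" "s < D"
  have "D * Suc x \<le> D * y" using \<open>x < y\<close> by (intro mult_le_mono2) simp
  then have "D + D * x \<le> D * y" by simp
  then show ?thesis using \<open>s < D\<close> by linarith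
qed

lemma digits_inj: "(\<forall>n<m. a n < (d::nat)) \<Longrightarrow> (\<forall>n<m. b n < d) \<Longrightarrow>
   (\<Sum>n<m. d^n * a n) = (\<Sum>n<m. d^n * b n) \<Longrightarrow> \<forall>n<m. a n = b n"
proof (induction m)
  case 0 then show ?case by simp
next
  case (Suc m)
  have sa: "(\<Sum>n<m. d^n * a n) < d^m" using Suc.prems(1) by (intro digits_lt) simp
  have sb: "(\<Sum>n<m. d^n * b n) < d^m" using Suc.prems(2) by (intro digits_lt) simp
  have eq: "(\<Sum>n<m. d^n * a n) + d^m * a m = (\<Sum>n<m. d^n * b n) + d^m * b m" using Suc.prems(3) by simp
  have am: "a m = b m"
  proof (rule ccontr)
    assume "a m \<noteq> b m"
    then consider "a m < b m" | "b m < a m" by linarith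
    then show False
    proof cases
      case 1 then show False using digits_step[OF 1 sa] eq by blast
    next
      case 2 then show False using digits_step[OF 2 sb] eq by metis
    qed
  qed
  then have "(\<Sum>n<m. d^n * a n) = (\<Sum>n<m. d^n * b n)" using eq by simp
  moreover have "\<forall>n<m. a n < d" "\<forall>n<m. b n < d" using Suc.prems(1,2) by auto
  ultimately have "\<forall>n<m. a n = b n" using Suc.IH by blast
  then show ?case using am by (auto simp: less_Suc_eq)
qed

definition Vv :: "('n \<Rightarrow> nat) \<Rightarrow> (nat \<Rightarrow> nat) \<Rightarrow> ('a \<Rightarrow> 'n spike_train) \<Rightarrow> nat set \<Rightarrow> 'a \<Rightarrow> nat \<Rightarrow> nat" where
  "Vv kpop \<Theta> S C \<omega> = restrict (\<lambda>c. \<Theta> (pop_count kpop c (S \<omega>))) C"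

lemma Vv_range: "\<forall>n. \<Theta> n \<in> {1..d} \<Longrightarrow> Vv kpop \<Theta> S C \<omega> \<in> (\<Pi>\<^sub>E c\<in>C. {1..d})"
  unfolding Vv_def by auto

lemma sf_Vv:
  assumes Th: "\<forall>n. \<Theta> n \<in> {1..d}" and fin: "finite C"
    and meas: "\<forall>c. (\<lambda>\<omega>. pop_count kpop c (S \<omega>)) \<in> measurable M (count_space UNIV)"
  shows "simple_function M (Vv kpop \<Theta> S C)"
  unfolding simple_function_def
proof
  show "finite (Vv kpop \<Theta> S C ` space M)"
    by (rule finite_subset[OF _ finite_PiE[OF fin, of "\<lambda>_. {1..d}"]]) (rule image_subsetI, rule Vv_range[OF Th], simp)
  show "\<forall>x\<in>Vv kpop \<Theta> S C ` space M. Vv kpop \<Theta> S C -` {x} \<inter> space M \<in> sets M"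
  proof
    fix x assume "x \<in> Vv kpop \<Theta> S C ` space M"
    then have ext: "x \<in> extensional C" unfolding Vv_def by auto
    have "Vv kpop \<Theta> S C -` {x} \<inter> space M = {\<omega>\<in>space M. \<forall>c\<in>C. \<Theta> (pop_count kpop c (S \<omega>)) = x c}"
      using ext unfolding Vv_def by (auto simp: extensional_def restrict_def fun_eq_iff)
    also have "\<dots> \<in> sets M"
    proof (rule sets.sets_Collect_finite_All[OF _ fin])
      fix c
      have "(\<lambda>\<omega>. \<Theta> (pop_count kpop c (S \<omega>))) \<in> measurable M (count_space UNIV)"
        using measurable_compose[OF spec[OF meas, of c] measurable_count_space] .
      then have "(\<lambda>\<omega>. \<Theta> (pop_count kpop c (S \<omega>))) -` {x c} \<inter> space M \<in> sets M"
        by (rule measurable_sets) simp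
      moreover have "(\<lambda>\<omega>. \<Theta> (pop_count kpop c (S \<omega>))) -` {x c} \<inter> space M = {\<omega>\<in>space M. \<Theta> (pop_count kpop c (S \<omega>)) = x c}" by blast
      ultimately show "{\<omega>\<in>space M. \<Theta> (pop_count kpop c (S \<omega>)) = x c} \<in> sets M" by simp
    qed
    finally show "Vv kpop \<Theta> S C -` {x} \<inter> space M \<in> sets M" .
  qed
qed

lemma cg_eq:
  assumes "prob_space M" and Th: "\<forall>n. \<Theta> n \<in> {1..d}" and fin: "finite C"
    and meas: "\<forall>c. (\<lambda>\<omega>. pop_count kpop c (S \<omega>)) \<in> measurable M (count_space UNIV)"
  shows "cg_entropy M S d \<Theta> kpop C = Hent M (Vv kpop \<Theta> S C)"
proof -
  define sl where "sl = sorted_list_of_set C"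
  have slC: "set sl = C" and len: "length sl = card C" using fin by (auto simp: sl_def)
  define \<phi> where "\<phi> v = (\<Sum>n<card C. d ^ n * v (sl ! n))" for v :: "nat \<Rightarrow> nat"
  have z: "zeta d \<Theta> kpop C (S \<omega>) = \<phi> (Vv kpop \<Theta> S C \<omega>)" for \<omega>
    unfolding zeta_def \<phi>_def Vv_def sl_def[symmetric]
    by (rule sum.cong) (use slC len nth_mem in auto)
  have inj: "inj_on \<phi> (Vv kpop \<Theta> S C ` space M)"
  proof (rule inj_onI)
    fix u v assume u: "u \<in> Vv kpop \<Theta> S C ` space M" and v: "v \<in> Vv kpop \<Theta> S C ` space M"
      and e: "\<phi> u = \<phi> v"
    obtain \<omega>1 \<omega>2 where u1: "u = Vv kpop \<Theta> S C \<omega>1" and v1: "v = Vv kpop \<Theta> S C \<omega>2" using u v by blast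
    have uP: "u \<in> (\<Pi>\<^sub>E c\<in>C. {1..d})" and vP: "v \<in> (\<Pi>\<^sub>E c\<in>C. {1..d})"
      unfolding u1 v1 by (rule Vv_range[OF Th])+
    have nthC: "n < card C \<Longrightarrow> sl ! n \<in> C" for n using slC len nth_mem by auto
    have split: "w \<in> (\<Pi>\<^sub>E c\<in>C. {1..d}) \<Longrightarrow> \<phi> w = (\<Sum>n<card C. d ^ n * (w (sl ! n) - 1)) + (\<Sum>n<card C. d ^ n)" for w
    proof -
      assume w: "w \<in> (\<Pi>\<^sub>E c\<in>C. {1..d})"
      have "d ^ n * w (sl ! n) = d ^ n * (w (sl ! n) - 1) + d ^ n" if "n < card C" for n
      proof -
        have "w (sl ! n) \<ge> 1" using w nthC[OF that] by auto
        then show ?thesis by (metis add.commute le_add_diff_inverse mult.right_neutral distrib_left)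
      qed
      then show ?thesis unfolding \<phi>_def by (simp add: sum.distrib[symmetric])
    qed
    have "(\<Sum>n<card C. d ^ n * (u (sl ! n) - 1)) = (\<Sum>n<card C. d ^ n * (v (sl ! n) - 1))"
      using e split[OF uP] split[OF vP] by simp
    moreover have "\<forall>n<card C. u (sl ! n) - 1 < d" "\<forall>n<card C. v (sl ! n) - 1 < d"
      using uP vP nthC by (fastforce simp: PiE_iff)+
    ultimately have "\<forall>n<card C. u (sl ! n) - 1 = v (sl ! n) - 1"
      using digits_inj[of "card C" "\<lambda>n. u (sl ! n) - 1" d "\<lambda>n. v (sl ! n) - 1"] by blast
    then have "\<forall>n<card C. u (sl ! n) = v (sl ! n)"
      using uP vP nthC by (force simp: PiE_iff)
    then have "\<forall>c\<in>C. u c = v c" using slC len by (metis in_set_conv_nth)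
    then show "u = v" using uP vP by (intro PiE_ext) auto
  qed
  have "cg_entropy M S d \<Theta> kpop C = Hent M (\<lambda>\<omega>. zeta d \<Theta> kpop C (S \<omega>))"
    unfolding cg_entropy_def Hent_def by simp
  also have "\<dots> = Hent M (\<lambda>\<omega>. \<phi> (Vv kpop \<Theta> S C \<omega>))" by (simp add: z)
  also have "\<dots> = Hent M (Vv kpop \<Theta> S C)"
    by (rule Hent_inj[OF assms(1) sf_Vv[OF Th fin meas] inj])
  finally show ?thesis .
qed


lemma restr_sub: "Y \<subseteq> X \<Longrightarrow> restrict (restrict f X) Y = restrict f Y"
  by (rule ext) (auto simp: restrict_def)

lemma Hent_pair:
  assumes P: "prob_space M" and Th: "\<forall>n. \<Theta> n \<in> {1..d}" and fin: "finite A" "finite B"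
    and meas: "\<forall>c. (\<lambda>\<omega>. pop_count kpop c (S \<omega>)) \<in> measurable M (count_space UNIV)"
  shows "Hent M (\<lambda>\<omega>. (Vv kpop \<Theta> S A \<omega>, Vv kpop \<Theta> S B \<omega>)) = Hent M (Vv kpop \<Theta> S (A \<union> B))"
proof -
  define \<pi> where "\<pi> h = (restrict h A, restrict h B)" for h :: "nat \<Rightarrow> nat"
  have e: "(Vv kpop \<Theta> S A \<omega>, Vv kpop \<Theta> S B \<omega>) = \<pi> (Vv kpop \<Theta> S (A \<union> B) \<omega>)" for \<omega>
    unfolding \<pi>_def Vv_def by (simp only: restr_sub Un_upper1 Un_upper2 Un_assoc)
  have inj: "inj_on \<pi> (Vv kpop \<Theta> S (A \<union> B) ` space M)"
  proof (rule inj_onI)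
    fix u v assume u: "u \<in> Vv kpop \<Theta> S (A \<union> B) ` space M" and v: "v \<in> Vv kpop \<Theta> S (A \<union> B) ` space M"
      and e: "\<pi> u = \<pi> v"
    have "u \<in> extensional (A \<union> B)" "v \<in> extensional (A \<union> B)" using u v unfolding Vv_def by auto
    moreover have "\<forall>c\<in>A \<union> B. u c = v c"
    proof
      fix c assume c: "c \<in> A \<union> B"
      have eA: "restrict u A = restrict v A" and eB: "restrict u B = restrict v B" using e by (simp_all add: \<pi>_def)
      show "u c = v c"
      proof (cases "c \<in> A")
        case True then show ?thesis using fun_cong[OF eA, of c] by simp
      next
        case False then show ?thesis using c fun_cong[OF eB, of c] by simp
      qed
    qed
    ultimately show "u = v" by (intro extensionalityI) auto
  qed
  show ?thesis unfolding e
    by (rule Hent_inj[OF P sf_Vv[OF Th _ meas] inj]) (use fin in simp)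
qed

lemma Hent_triple:
  assumes P: "prob_space M" and Th: "\<forall>n. \<Theta> n \<in> {1..d}" and fin: "finite A" "finite B" "finite Ou"
    and meas: "\<forall>c. (\<lambda>\<omega>. pop_count kpop c (S \<omega>)) \<in> measurable M (count_space UNIV)"
  shows "Hent M (\<lambda>\<omega>. (Vv kpop \<Theta> S A \<omega>, Vv kpop \<Theta> S B \<omega>, Vv kpop \<Theta> S Ou \<omega>)) = Hent M (Vv kpop \<Theta> S (A \<union> B \<union> Ou))"
proof -
  define \<pi> where "\<pi> h = (restrict h A, restrict h B, restrict h Ou)" for h :: "nat \<Rightarrow> nat"
  have e: "(Vv kpop \<Theta> S A \<omega>, Vv kpop \<Theta> S B \<omega>, Vv kpop \<Theta> S Ou \<omega>) = \<pi> (Vv kpop \<Theta> S (A \<union> B \<union> Ou) \<omega>)" for \<omega>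
    unfolding \<pi>_def Vv_def
    by (subst (1 2 3) restr_sub) auto
  have inj: "inj_on \<pi> (Vv kpop \<Theta> S (A \<union> B \<union> Ou) ` space M)"
  proof (rule inj_onI)
    fix u v assume u: "u \<in> Vv kpop \<Theta> S (A \<union> B \<union> Ou) ` space M" and v: "v \<in> Vv kpop \<Theta> S (A \<union> B \<union> Ou) ` space M"
      and e: "\<pi> u = \<pi> v"
    have "u \<in> extensional (A \<union> B \<union> Ou)" "v \<in> extensional (A \<union> B \<union> Ou)" using u v unfolding Vv_def by auto
    moreover have "\<forall>c\<in>A \<union> B \<union> Ou. u c = v c"
    proof
      fix c assume c: "c \<in> A \<union> B \<union> Ou"
      have eA: "restrict u A = restrict v A" and eB: "restrict u B = restrict v B"
        and eO: "restrict u Ou = restrict v Ou" using e by (simp_all add: \<pi>_def)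
      show "u c = v c"
      proof (cases "c \<in> A")
        case True then show ?thesis using fun_cong[OF eA, of c] by simp
      next
        case nA: False
        show ?thesis
        proof (cases "c \<in> B")
          case True then show ?thesis using fun_cong[OF eB, of c] by simp
        next
          case False then show ?thesis using c nA fun_cong[OF eO, of c] by simp
        qed
      qed
    qed
    ultimately show "u = v" by (intro extensionalityI) auto
  qed
  show ?thesis unfolding e
    by (rule Hent_inj[OF P sf_Vv[OF Th _ meas] inj]) (use fin in simp)
qed

lemma MI_le:
  assumes P: "prob_space M" and Th: "\<forall>n. \<Theta> n \<in> {1..d}" and fin: "finite A" "finite B" "finite Ou"
    and meas: "\<forall>c. (\<lambda>\<omega>. pop_count kpop c (S \<omega>)) \<in> measurable M (count_space UNIV)"
  shows "MI3 (cg_entropy M S d \<Theta> kpop) A B Ou \<le> MI2 (cg_entropy M S d \<Theta> kpop) A B"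
proof -
  let ?V = "Vv kpop \<Theta> S"
  have sf: "simple_function M (?V C)" if "finite C" for C using sf_Vv[OF Th that meas] .
  have H: "cg_entropy M S d \<Theta> kpop C = Hent M (?V C)" if "finite C" for C using cg_eq[OF P Th that meas] .
  have "Hent M (?V Ou) + Hent M (\<lambda>\<omega>. (?V A \<omega>, ?V B \<omega>, ?V Ou \<omega>)) \<le> Hent M (\<lambda>\<omega>. (?V A \<omega>, ?V Ou \<omega>)) + Hent M (\<lambda>\<omega>. (?V B \<omega>, ?V Ou \<omega>))"
    by (rule submod[OF P sf sf sf]) (use fin in auto)
  then have "Hent M (?V Ou) + Hent M (?V (A \<union> B \<union> Ou)) \<le> Hent M (?V (A \<union> Ou)) + Hent M (?V (B \<union> Ou))"
    unfolding Hent_triple[OF P Th fin meas] Hent_pair[OF P Th fin(1,3) meas] Hent_pair[OF P Th fin(2,3) meas] .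
  moreover have "cg_entropy M S d \<Theta> kpop A = Hent M (?V A)" "cg_entropy M S d \<Theta> kpop B = Hent M (?V B)"
    "cg_entropy M S d \<Theta> kpop Ou = Hent M (?V Ou)" "cg_entropy M S d \<Theta> kpop (A \<union> B) = Hent M (?V (A \<union> B))"
    "cg_entropy M S d \<Theta> kpop (A \<union> Ou) = Hent M (?V (A \<union> Ou))" "cg_entropy M S d \<Theta> kpop (B \<union> Ou) = Hent M (?V (B \<union> Ou))"
    "cg_entropy M S d \<Theta> kpop (A \<union> B \<union> Ou) = Hent M (?V (A \<union> B \<union> Ou))"
    using fin by (intro H; simp)+
  ultimately show ?thesis unfolding MI3_def MI2_def by linarith
qed

theorem theorem5p3:
  fixes M :: "'a measure"
    and S :: "'a \<Rightarrow> 'n spike_train"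
    and kpop :: "'n \<Rightarrow> nat"
    and \<Theta> :: "nat \<Rightarrow> nat"
    and K d :: nat and T :: real
    and I Out :: "nat set"
  assumes "prob_space M"
    and "T > 0"
    and "\<forall>n. \<Theta> n \<in> {1..d}"
    and "\<forall>\<xi>. kpop \<xi> \<in> {1..K}"
    and "\<forall>\<omega> \<in> space M. \<forall>(t, \<xi>) \<in> set (S \<omega>). 0 \<le> t \<and> t < T"
    and "\<forall>c. (\<lambda>\<omega>. pop_count kpop c (S \<omega>)) \<in> measurable M (count_space UNIV)"
    and "I \<subseteq> {1..K}" and "Out \<subseteq> {1..K}" and "I \<inter> Out = {}"
  shows "degeneracy (cg_entropy M S d \<Theta> kpop) I Out
           \<le> complexity (cg_entropy M S d \<Theta> kpop) I Out"
proof -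
  have fI: "finite I" using assms(7) finite_subset by blast
  have fO: "finite Out" using assms(8) finite_subset by blast
  show ?thesis
    unfolding degeneracy_def complexity_def
  proof (intro sum_mono mult_left_mono)
    fix k Ik assume "Ik \<in> {J. J \<subseteq> I \<and> card J = k}"
    then have "finite Ik" "finite (I - Ik)" using fI finite_subset by auto
    then show "MI3 (cg_entropy M S d \<Theta> kpop) Ik (I - Ik) Out \<le> MI2 (cg_entropy M S d \<Theta> kpop) Ik (I - Ik)"
      by (intro MI_le[OF assms(1,3) _ _ fO assms(6)])
  qed simp
qed

end
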